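(* Let $G=(V,E,w)$ be a connected weighted graph with $n$ vertices, and let $k\in\mathbb{R}$. Then $$ \sum_{\{s,t\}\subseteq V}\big(H^{(2k-1)}_{st}\big)^{2}=n\cdot\sum_{e\in E}w_e\cdot\big(H^{(2k)}_{e}\big)^{2}, $$ where the left sum is over unordered pairs of distinct vertices.
   Context: $G=(V,E,w)$ is undirected with positive edge weights $w_e$ and graph Laplacian $L=D-A$ (weighted degree matrix minus weighted adjacency matrix), with spectral decomposition $L=\sum_i\lambda_ix_ix_i^{T}$. For $k\in\mathbb{R}$, $(L^{+})^{k}:=\sum_{i:\lambda_i>0}\lambda_i^{-k}x_ix_i^{T}$. With $1_v$ the indicator vector of vertex $v$, the $k$-harmonic distance is $H^{(k)}_{st}=\sqrt{(1_s-1_t)^{T}(L^{+})^{k}(1_s-1_t)}$, and $H^{(k)}_e:=H^{(k)}_{st}$ for an edge $e=\{s,t\}$. *)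

theory Defs
  imports "HOL-Analysis.Analysis"
begin

text \<open>Vertices are the elements of a finite type 'n (so n = CARD('n)).
  A weighted graph is given by a symmetric weight function w with w s t > 0 iff {s,t} is an edge,
  w s t = 0 otherwise, and no loops.\<close>

definition weighted_graph :: "('n::finite \<Rightarrow> 'n \<Rightarrow> real) \<Rightarrow> bool" where
  "weighted_graph w \<longleftrightarrow> (\<forall>s t. w s t = w t s) \<and> (\<forall>s t. w s t \<ge> 0) \<and> (\<forall>s. w s s = 0)"

definition edges :: "('n::finite \<Rightarrow> 'n \<Rightarrow> real) \<Rightarrow> 'n set set" where
  "edges w = {{s, t} | s t. s \<noteq> t \<and> w s t > 0}"

definition connected_graph :: "('n::finite \<Rightarrow> 'n \<Rightarrow> real) \<Rightarrow> bool" where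
  "connected_graph w \<longleftrightarrow> (\<forall>s t. (s, t) \<in> {(u, v). w u v > 0}\<^sup>*)"

definition laplacian :: "('n::finite \<Rightarrow> 'n \<Rightarrow> real) \<Rightarrow> real^'n^'n" where
  "laplacian w = (\<chi> i j. (if i = j then (\<Sum>l\<in>UNIV. w i l) else 0) - w i j)"

definition outer :: "real^'n \<Rightarrow> real^'n \<Rightarrow> real^'n^'n" where
  "outer u v = (\<chi> i j. u $ i * v $ j)"

text \<open>(L^+)^k built from a spectral decomposition L = sum_i lam_i x_i x_i^T.\<close>
definition pinv_pow :: "('n::finite \<Rightarrow> real) \<Rightarrow> ('n \<Rightarrow> real^'n) \<Rightarrow> real \<Rightarrow> real^'n^'n" where
  "pinv_pow lam x k = (\<Sum>i\<in>{i. lam i > 0}. (lam i powr (-k)) *\<^sub>R outer (x i) (x i))"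

definition ind :: "'n::finite \<Rightarrow> real^'n" where
  "ind v = axis v 1"

definition harm_dist :: "('n::finite \<Rightarrow> real) \<Rightarrow> ('n \<Rightarrow> real^'n) \<Rightarrow> real \<Rightarrow> 'n \<Rightarrow> 'n \<Rightarrow> real" where
  "harm_dist lam x k s t =
     sqrt ((ind s - ind t) \<bullet> (pinv_pow lam x k *v (ind s - ind t)))"

definition on_pair :: "('n \<Rightarrow> 'n \<Rightarrow> 'b) \<Rightarrow> 'n set \<Rightarrow> 'b" where
  "on_pair f e = (let s = (SOME s. s \<in> e) in f s (SOME t. t \<in> e \<and> t \<noteq> s))"

end

theory Submission imports Defs begin

lemma outer_mulv: "outer u v *v y = (v \<bullet> y) *\<^sub>R u"
  by (simp add: vec_eq_iff outer_def matrix_vector_mult_def inner_vec_def sum_distrib_left mult_ac)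

lemma sum_mulv: "(\<Sum>i\<in>S. (A i :: real^'n^'m)) *v y = (\<Sum>i\<in>S. A i *v y)"
  by (induction S rule: infinite_finite_induct) (auto simp: matrix_vector_mult_add_rdistrib)

lemma scale_mulv: "(c *\<^sub>R (A::real^'n^'m)) *v y = c *\<^sub>R (A *v y)"
  by (simp add: scaleR_matrix_vector_assoc)

lemma pinv_quad:
  "v \<bullet> (pinv_pow lam x k *v v) = (\<Sum>i\<in>{i. lam i > 0}. lam i powr (-k) * (x i \<bullet> v)^2)"
  unfolding pinv_pow_def sum_mulv scale_mulv outer_mulv
  by (simp add: inner_sum_right power2_eq_square inner_commute mult.assoc)

lemma inner_ind: "u \<bullet> (ind s - ind t) = u $ s - u $ t"
  by (simp add: ind_def inner_diff_right inner_axis)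

lemma harm_sq:
  "(harm_dist lam x k s t)^2 = (\<Sum>i\<in>{i. lam i > 0}. lam i powr (-k) * (x i $ s - x i $ t)^2)"
proof -
  have "0 \<le> (\<Sum>i\<in>{i. lam i > 0}. lam i powr (-k) * (x i $ s - x i $ t)^2)"
    by (intro sum_nonneg) auto
  then show ?thesis unfolding harm_dist_def pinv_quad inner_ind by simp
qed

lemma on_pair_eq:
  assumes "s \<noteq> t" "\<And>a b. F a b = F b a"
  shows "on_pair F {s,t} = F s t"
proof -
  define a where "a = (SOME a. a \<in> {s,t})"
  have a: "a \<in> {s,t}" unfolding a_def by (rule someI_ex) auto
  define b where "b = (SOME b. b \<in> {s,t} \<and> b \<noteq> a)"
  have b: "b \<in> {s,t} \<and> b \<noteq> a" unfolding b_def by (rule someI_ex) (use a assms in auto)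
  have "on_pair F {s,t} = F a b" unfolding on_pair_def a_def b_def Let_def by simp
  also have "\<dots> = F s t" using a b assms by auto
  finally show ?thesis .
qed

lemma on_pair_mult: "on_pair (\<lambda>s t. F s t * G s t) p = on_pair F p * on_pair G p"
  by (simp add: on_pair_def Let_def)

lemma on_pair_sq: "(on_pair F p)^2 = on_pair (\<lambda>s t. (F s t)^2) p"
  by (simp add: on_pair_def Let_def)

lemma pair_sum:
  fixes F :: "'n::finite \<Rightarrow> 'n \<Rightarrow> real"
  assumes sym: "\<And>a b. F a b = F b a" and diag: "\<And>a. F a a = 0"
  shows "(\<Sum>p\<in>{{s, t} | s t. s \<noteq> t}. on_pair F p) = (\<Sum>s\<in>UNIV. \<Sum>t\<in>UNIV. F s t) / 2"
proof -
  let ?T = "{{s, t} | s t. (s::'n) \<noteq> t}"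
  let ?S = "{(s,t). (s::'n) \<noteq> t}"
  have fT: "finite ?T" by (rule finite_subset[of _ "Pow UNIV"]) auto
  have "(\<Sum>s\<in>UNIV. \<Sum>t\<in>UNIV. F s t) = (\<Sum>(s,t)\<in>UNIV. F s t)"
    by (simp add: sum.cartesian_product)
  also have "\<dots> = (\<Sum>(s,t)\<in>?S. F s t)"
    by (rule sum.mono_neutral_right) (auto simp: diag)
  also have "\<dots> = (\<Sum>p\<in>?T. \<Sum>q\<in>{q\<in>?S. (\<lambda>(s,t). {s,t}) q = p}. (\<lambda>(s,t). F s t) q)"
    by (rule sum.group[symmetric]) (auto simp: fT)
  also have "\<dots> = (\<Sum>p\<in>?T. 2 * on_pair F p)"
  proof (rule sum.cong[OF refl])
    fix p assume "p \<in> ?T"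
    then obtain s t where p: "p = {s,t}" "s \<noteq> t" by auto
    have "{q\<in>?S. (\<lambda>(s,t). {s,t}) q = p} = {(s,t),(t,s)}"
      using p by (auto simp: doubleton_eq_iff)
    then show "(\<Sum>q\<in>{q\<in>?S. (\<lambda>(s,t). {s,t}) q = p}. (\<lambda>(s,t). F s t) q) = 2 * on_pair F p"
      using p by (simp add: on_pair_eq sym)
  qed
  finally show ?thesis by (simp add: sum_distrib_left[symmetric])
qed

lemma sq_sum: "(\<Sum>s\<in>UNIV. \<Sum>t\<in>UNIV. ((f::'n::finite\<Rightarrow>real) s - f t)^2)
   = 2 * real CARD('n) * (\<Sum>s\<in>UNIV. (f s)^2) - 2 * (\<Sum>s\<in>UNIV. f s)^2"
  by (simp add: power2_diff sum.distrib sum_subtractf sum_distrib_left sum_distrib_right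
        power2_eq_square algebra_simps)

lemma lap_mulv: "(laplacian w *v f) $ s = (\<Sum>t\<in>UNIV. w s t * (f$s - f$t))"
proof -
  have "(laplacian w *v f) $ s = (\<Sum>t\<in>UNIV. (if s = t then (\<Sum>l\<in>UNIV. w s l) else 0) * f$t) - (\<Sum>t\<in>UNIV. w s t * f$t)"
    by (simp add: laplacian_def matrix_vector_mult_def left_diff_distrib sum_subtractf)
  also have "(\<Sum>t\<in>UNIV. (if s = t then (\<Sum>l\<in>UNIV. w s l) else 0) * f$t) = (\<Sum>l\<in>UNIV. w s l * f$s)"
    by (simp add: sum_distrib_right[symmetric] if_distribR if_distrib sum.delta cong: if_cong)
  finally show ?thesis by (simp add: right_diff_distrib sum_subtractf)
qed

lemma lap_quad:
  assumes "weighted_graph w"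
  shows "f \<bullet> (laplacian w *v f) = (\<Sum>s\<in>UNIV. \<Sum>t\<in>UNIV. w s t * (f $ s - f $ t)^2) / 2"
proof -
  have sym: "\<And>s t. w s t = w t s" using assms by (simp add: weighted_graph_def)
  have "f \<bullet> (laplacian w *v f) = (\<Sum>s\<in>UNIV. \<Sum>t\<in>UNIV. w s t * (f$s * f$s - f$s * f$t))"
    by (simp add: lap_mulv inner_vec_def sum_distrib_left algebra_simps)
  moreover have "(\<Sum>s\<in>UNIV. \<Sum>t\<in>UNIV. w s t * (f$t * f$t)) = (\<Sum>s\<in>UNIV. \<Sum>t\<in>UNIV. w s t * (f$s * f$s))"
    by (subst sum.swap) (simp add: sym)
  moreover have "(\<Sum>s\<in>UNIV. \<Sum>t\<in>UNIV. w s t * (f $ s - f $ t)^2) =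
     (\<Sum>s\<in>UNIV. \<Sum>t\<in>UNIV. w s t * (f$s * f$s)) + (\<Sum>s\<in>UNIV. \<Sum>t\<in>UNIV. w s t * (f$t * f$t))
     - 2 * (\<Sum>s\<in>UNIV. \<Sum>t\<in>UNIV. w s t * (f$s * f$t))"
    by (simp add: power2_diff sum.distrib sum_subtractf sum_distrib_left algebra_simps power2_eq_square)
  ultimately show ?thesis
    by (simp add: sum.distrib sum_subtractf right_diff_distrib)
qed

lemma lap_one:
  assumes "weighted_graph w"
  shows "(\<chi> i. 1) \<bullet> (laplacian w *v f) = 0"
proof -
  have sym: "\<And>s t. w s t = w t s" using assms by (simp add: weighted_graph_def)
  have "(\<chi> i. 1) \<bullet> (laplacian w *v f) = (\<Sum>s\<in>UNIV. \<Sum>t\<in>UNIV. w s t * f$s) - (\<Sum>s\<in>UNIV. \<Sum>t\<in>UNIV. w s t * f$t)"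
    by (simp add: lap_mulv inner_vec_def sum_subtractf algebra_simps)
  also have "(\<Sum>s\<in>UNIV. \<Sum>t\<in>UNIV. w s t * f$t) = (\<Sum>s\<in>UNIV. \<Sum>t\<in>UNIV. w s t * f$s)"
    by (subst sum.swap) (simp add: sym)
  finally show ?thesis by simp
qed

lemma sum3_swap: "(\<Sum>s\<in>A. \<Sum>t\<in>B. \<Sum>i\<in>C. (f s t i::real)) = (\<Sum>i\<in>C. \<Sum>s\<in>A. \<Sum>t\<in>B. f s t i)"
proof -
  have "(\<Sum>s\<in>A. \<Sum>t\<in>B. \<Sum>i\<in>C. f s t i) = (\<Sum>s\<in>A. \<Sum>i\<in>C. \<Sum>t\<in>B. f s t i)"
    by (rule sum.cong[OF refl], rule sum.swap)
  also have "\<dots> = (\<Sum>i\<in>C. \<Sum>s\<in>A. \<Sum>t\<in>B. f s t i)"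
    by (rule sum.swap)
  finally show ?thesis .
qed

theorem theorem6p3:
  fixes w :: "'n::finite \<Rightarrow> 'n \<Rightarrow> real"
    and lam :: "'n \<Rightarrow> real" and x :: "'n \<Rightarrow> real^'n" and k :: real
  assumes "weighted_graph w"
    and "connected_graph w"
    and "\<And>i j. x i \<bullet> x j = (if i = j then 1 else 0)"
    and "laplacian w = (\<Sum>i\<in>UNIV. lam i *\<^sub>R outer (x i) (x i))"
  shows "(\<Sum>p\<in>{{s, t} | s t. s \<noteq> t}. (on_pair (harm_dist lam x (2 * k - 1)) p)\<^sup>2)
       = real CARD('n) * (\<Sum>e\<in>edges w. on_pair w e * (on_pair (harm_dist lam x (2 * k)) e)\<^sup>2)"
proof -
  have wg: "weighted_graph w" by fact
  have sym: "\<And>s t. w s t = w t s" and nn: "\<And>s t. w s t \<ge> 0" and dg: "\<And>s. w s s = 0"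
    using assms(1) by (auto simp: weighted_graph_def)
  note on = assms(3)
  let ?P = "{i. lam i > 0}"
  let ?T = "{{s, t} | s t. (s::'n) \<noteq> t}"
  have eig: "laplacian w *v x j = lam j *\<^sub>R x j" for j
    unfolding assms(4) sum_mulv scale_mulv outer_mulv
    by (simp add: inner_commute on if_distrib if_distribR sum.delta cong: if_cong)
  have lamq: "lam j = (\<Sum>s\<in>UNIV. \<Sum>t\<in>UNIV. w s t * (x j $ s - x j $ t)^2) / 2" for j
  proof -
    have "x j \<bullet> (laplacian w *v x j) = lam j" by (simp add: eig on)
    then show ?thesis using lap_quad[OF wg, of "x j"] by simp
  qed
  have zs: "(\<Sum>s\<in>UNIV. x j $ s) = 0" if "lam j > 0" for j
  proof -
    have "0 = (\<chi> i. 1) \<bullet> (laplacian w *v x j)" using lap_one[OF wg] by simp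
    also have "\<dots> = lam j * (\<Sum>s\<in>UNIV. x j $ s)" by (simp add: eig inner_vec_def sum_distrib_left)
    finally show ?thesis using that by simp
  qed
  have ns: "(\<Sum>s\<in>UNIV. (x j $ s)^2) = 1" for j
    using on[of j j] by (simp add: inner_vec_def power2_eq_square)
  have Hsym: "harm_dist lam x k' a b ^ 2 = harm_dist lam x k' b a ^ 2" for k' a b
    unfolding harm_sq by (simp add: power2_commute)
  have Hdg: "harm_dist lam x k' a a ^ 2 = 0" for k' a
    unfolding harm_sq by simp
  have "(\<Sum>p\<in>?T. (on_pair (harm_dist lam x (2 * k - 1)) p)\<^sup>2)
     = (\<Sum>p\<in>?T. on_pair (\<lambda>s t. (harm_dist lam x (2 * k - 1) s t)^2) p)"
    by (simp add: on_pair_sq)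
  also have "\<dots> = (\<Sum>s\<in>UNIV. \<Sum>t\<in>UNIV. (harm_dist lam x (2 * k - 1) s t)^2) / 2"
    by (rule pair_sum) (auto simp: Hsym Hdg)
  also have "\<dots> = (\<Sum>i\<in>?P. lam i powr (-(2*k-1)) * (\<Sum>s\<in>UNIV. \<Sum>t\<in>UNIV. (x i $ s - x i $ t)^2)) / 2"
    unfolding harm_sq sum_distrib_left by (subst sum3_swap) (rule refl)
  also have "\<dots> = real CARD('n) * (\<Sum>i\<in>?P. lam i powr (-(2*k-1)))"
  proof -
    have "(\<Sum>i\<in>?P. lam i powr (-(2*k-1)) * (\<Sum>s\<in>UNIV. \<Sum>t\<in>UNIV. (x i $ s - x i $ t)^2))
        = (\<Sum>i\<in>?P. lam i powr (-(2*k-1)) * (2 * real CARD('n)))"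
      by (rule sum.cong[OF refl]) (simp add: sq_sum[where f="\<lambda>s. x _ $ s"] zs ns)
    then show ?thesis by (simp add: sum_distrib_left sum_distrib_right mult_ac)
  qed
  finally have L: "(\<Sum>p\<in>?T. (on_pair (harm_dist lam x (2 * k - 1)) p)\<^sup>2) = real CARD('n) * (\<Sum>i\<in>?P. lam i powr (-(2*k-1)))" .
  let ?F = "\<lambda>s t. w s t * (harm_dist lam x (2 * k) s t)^2"
  have fT: "finite ?T" by (rule finite_subset[of _ "Pow UNIV"]) auto
  have "(\<Sum>e\<in>edges w. on_pair w e * (on_pair (harm_dist lam x (2 * k)) e)\<^sup>2)
      = (\<Sum>e\<in>edges w. on_pair ?F e)"
    by (simp add: on_pair_sq on_pair_mult)
  also have "\<dots> = (\<Sum>e\<in>?T. on_pair ?F e)"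
  proof (rule sum.mono_neutral_left[OF fT])
    show "edges w \<subseteq> ?T" unfolding edges_def by auto
    show "\<forall>i\<in>?T - edges w. on_pair ?F i = 0"
    proof
      fix p assume "p \<in> ?T - edges w"
      then obtain s t where p: "p = {s,t}" "s \<noteq> t" "\<not> w s t > 0" unfolding edges_def by blast
      then have "w s t = 0" using nn[of s t] by linarith
      then show "on_pair ?F p = 0" using p by (subst p(1), subst on_pair_eq) (auto simp: sym Hsym)
    qed
  qed
  also have "\<dots> = (\<Sum>s\<in>UNIV. \<Sum>t\<in>UNIV. ?F s t) / 2"
    by (rule pair_sum) (auto simp: Hsym sym dg)
  also have "\<dots> = (\<Sum>i\<in>?P. lam i powr (-(2*k)) * ((\<Sum>s\<in>UNIV. \<Sum>t\<in>UNIV. w s t * (x i $ s - x i $ t)^2) / 2))"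
    unfolding harm_sq sum_distrib_left sum_divide_distrib
    by (subst sum3_swap) (simp add: mult_ac)
  also have "\<dots> = (\<Sum>i\<in>?P. lam i powr (-(2*k-1)))"
  proof (rule sum.cong[OF refl])
    fix i assume "i \<in> ?P"
    then have "lam i > 0" by simp
    then show "lam i powr (-(2*k)) * ((\<Sum>s\<in>UNIV. \<Sum>t\<in>UNIV. w s t * (x i $ s - x i $ t)^2) / 2)
       = lam i powr (-(2*k-1))"
    proof -
      have "lam i powr (1 - 2*k) = lam i powr (-(2*k)) * lam i powr 1"
        using powr_add[of "lam i" "-(2*k)" 1] by (simp add: algebra_simps)
      also have "\<dots> = lam i powr (-(2*k)) * lam i" using \<open>lam i > 0\<close> by simp
      finally have "lam i powr (1 - 2*k) = lam i powr (-(2*k)) * lam i" .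
      then show ?thesis unfolding lamq[of i, symmetric] using \<open>lam i > 0\<close> by simp
    qed
  qed
  finally show ?thesis using L by simp
qed

end
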